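(* Let $g_{n,j}$ be the number of decorated partial dual skew Dyck paths consisting of $n$ steps and ending at level $j$, and let $G(z,u)=\sum_{n,j\ge0}g_{n,j}z^nu^j$. Put $W=\sqrt{1-6z^2+5z^4}$, with the branch satisfying $W=1$ at $z=0$, and $$s_1=\frac{2z}{1+z^2-W},\qquad S=\frac{1+z^2-W}{2z^2}.$$ Then $$G(z,u)=\frac{3z^2-3+W}{2z(2-z^2)(u-s_1)},$$ and for every $j\ge 0$, $$[u^j]G(z,u)=\frac{3z^2-3+W}{2(z^2-2)}\,z^jS^{j+1}.$$
   Context: A decorated (partial) dual skew Dyck path is a lattice path with the following properties. - It starts at $(0,0)$. - It uses down-steps $(1,-1)$ and up-steps $(1,1)$. - Each up-step is coloured either black or blue. - It never goes below the $x$-axis. - A down-step is never immediately followed by a blue up-step, and a blue up-step is never immediately followed by a down-step. The path need not end on the $x$-axis; its level is the final $y$-coordinate. The empty path counts, with $n=0$ and $j=0$. These paths are the mirror images of skew Dyck path prefixes, with a blue up-step encoding a step $(-1,1)$. *)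

theory Defs
  imports "HOL-Analysis.Analysis"
begin

datatype step = UpBlack | UpBlue | Down

fun step_delta :: "step \<Rightarrow> int" where
  "step_delta UpBlack = 1"
| "step_delta UpBlue = 1"
| "step_delta Down = -1"

definition path_level :: "step list \<Rightarrow> int" where
  "path_level xs = (\<Sum>s\<leftarrow>xs. step_delta s)"

definition dsd_path :: "step list \<Rightarrow> bool" where
  "dsd_path xs \<longleftrightarrow>
     (\<forall>k\<le>length xs. path_level (take k xs) \<ge> 0) \<and>
     (\<forall>i. Suc i < length xs \<longrightarrow>
        \<not> (xs ! i = Down \<and> xs ! Suc i = UpBlue) \<and>
        \<not> (xs ! i = UpBlue \<and> xs ! Suc i = Down))"

definition g :: "nat \<Rightarrow> nat \<Rightarrow> nat" where
  "g n j = card {xs. length xs = n \<and> dsd_path xs \<and> path_level xs = int j}"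

definition Wf :: "complex \<Rightarrow> complex" where
  "Wf z = csqrt (1 - 6 * z^2 + 5 * z^4)"

definition s1 :: "complex \<Rightarrow> complex" where
  "s1 z = 2 * z / (1 + z^2 - Wf z)"

definition Sf :: "complex \<Rightarrow> complex" where
  "Sf z = (1 + z^2 - Wf z) / (2 * z^2)"

end

theory Submission
  imports Defs "HOL-Complex_Analysis.Complex_Analysis"
begin


definition lastcls :: "step list \<Rightarrow> step" where
  "lastcls xs = (if xs = [] then UpBlack else last xs)"

definition okst :: "step \<Rightarrow> step \<Rightarrow> bool" where
  "okst p s \<longleftrightarrow> \<not> (p = Down \<and> s = UpBlue) \<and> \<not> (p = UpBlue \<and> s = Down)"

lemma level_append[simp]: "path_level (xs @ ys) = path_level xs + path_level ys"
  by (simp add: path_level_def)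

lemma level_single[simp]: "path_level [s] = step_delta s"
  by (simp add: path_level_def)

lemma level_Nil[simp]: "path_level [] = 0"
  by (simp add: path_level_def)

lemma dsd_Nil: "dsd_path []"
  by (simp add: dsd_path_def)

lemma dsd_snoc:
  "dsd_path (xs @ [s]) \<longleftrightarrow> dsd_path xs \<and> path_level xs + step_delta s \<ge> 0 \<and> okst (lastcls xs) s"
proof
  assume H: "dsd_path (xs @ [s])"
  have A: "\<forall>k\<le>length xs. path_level (take k xs) \<ge> 0"
  proof (intro allI impI)
    fix k assume "k \<le> length xs"
    then have "take k (xs @ [s]) = take k xs" by simp
    then show "path_level (take k xs) \<ge> 0" using H \<open>k \<le> length xs\<close> unfolding dsd_path_def
      by (metis le_SucI length_append_singleton)
  qed
  have B: "\<forall>i. Suc i < length xs \<longrightarrow>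
        \<not> (xs ! i = Down \<and> xs ! Suc i = UpBlue) \<and>
        \<not> (xs ! i = UpBlue \<and> xs ! Suc i = Down)"
  proof (intro allI impI)
    fix i assume i: "Suc i < length xs"
    then have "(xs @ [s]) ! i = xs ! i" "(xs @ [s]) ! Suc i = xs ! Suc i"
      by (simp_all add: nth_append)
    then show "\<not> (xs ! i = Down \<and> xs ! Suc i = UpBlue) \<and> \<not> (xs ! i = UpBlue \<and> xs ! Suc i = Down)"
      using H i unfolding dsd_path_def by (metis length_append_singleton less_SucI)
  qed
  have C: "path_level xs + step_delta s \<ge> 0"
    using H unfolding dsd_path_def by (metis le_refl take_all level_append level_single)
  have D: "okst (lastcls xs) s"
  proof (cases "xs = []")
    case True then show ?thesis by (simp add: lastcls_def okst_def)
  next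
    case False
    then obtain i where i: "length xs = Suc i" by (cases xs) auto
    then have "(xs @ [s]) ! i = last xs" "(xs @ [s]) ! Suc i = s"
      using False by (simp_all add: nth_append last_conv_nth)
    then show ?thesis using H i False unfolding dsd_path_def okst_def lastcls_def
      by (metis length_append_singleton lessI)
  qed
  show "dsd_path xs \<and> path_level xs + step_delta s \<ge> 0 \<and> okst (lastcls xs) s"
    using A B C D by (simp add: dsd_path_def)
next
  assume H: "dsd_path xs \<and> path_level xs + step_delta s \<ge> 0 \<and> okst (lastcls xs) s"
  have A: "\<forall>k\<le>length (xs @ [s]). path_level (take k (xs @ [s])) \<ge> 0"
  proof (intro allI impI)
    fix k assume k: "k \<le> length (xs @ [s])"
    show "path_level (take k (xs @ [s])) \<ge> 0"
    proof (cases "k \<le> length xs")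
      case True then show ?thesis using H by (simp add: dsd_path_def)
    next
      case False then have "take k (xs @ [s]) = xs @ [s]" using k by simp
      then show ?thesis using H by simp
    qed
  qed
  have B: "\<forall>i. Suc i < length (xs @ [s]) \<longrightarrow>
        \<not> ((xs @ [s]) ! i = Down \<and> (xs @ [s]) ! Suc i = UpBlue) \<and>
        \<not> ((xs @ [s]) ! i = UpBlue \<and> (xs @ [s]) ! Suc i = Down)"
  proof (intro allI impI)
    fix i assume i: "Suc i < length (xs @ [s])"
    show "\<not> ((xs @ [s]) ! i = Down \<and> (xs @ [s]) ! Suc i = UpBlue) \<and>
        \<not> ((xs @ [s]) ! i = UpBlue \<and> (xs @ [s]) ! Suc i = Down)"
    proof (cases "Suc i < length xs")
      case True
      then show ?thesis using H by (simp add: nth_append dsd_path_def)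
    next
      case False
      then have e: "Suc i = length xs" using i by simp
      then have "xs \<noteq> []" by auto
      then have "(xs @ [s]) ! i = last xs" "(xs @ [s]) ! Suc i = s"
        using e[symmetric] by (simp_all add: nth_append last_conv_nth)
      then show ?thesis using H \<open>xs \<noteq> []\<close> by (simp add: okst_def lastcls_def)
    qed
  qed
  show "dsd_path (xs @ [s])" using A B by (simp add: dsd_path_def)
qed

lemma UNIV_step: "(UNIV :: step set) = {UpBlack, UpBlue, Down}"
  using step.exhaust by auto

lemma finite_len: "finite {xs :: step list. length xs = n}"
proof -
  have "finite {xs :: step list. set xs \<subseteq> UNIV \<and> length xs = n}"
    by (rule finite_lists_length_eq) (simp add: UNIV_step)
  then show ?thesis by simp
qed

lemma card_len: "card {xs :: step list. length xs = n} = 3 ^ n"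
proof -
  have "card {xs :: step list. set xs \<subseteq> UNIV \<and> length xs = n} = card (UNIV :: step set) ^ n"
    by (rule card_lists_length_eq) (simp add: UNIV_step)
  moreover have "card (UNIV :: step set) = 3" by (simp add: UNIV_step)
  ultimately show ?thesis by simp
qed

definition PSi :: "nat \<Rightarrow> int \<Rightarrow> step \<Rightarrow> step list set" where
  "PSi n l s = {xs. length xs = n \<and> dsd_path xs \<and> path_level xs = l \<and> lastcls xs = s}"

lemma finite_PSi: "finite (PSi n l s)"
  by (rule finite_subset[OF _ finite_len[of n]]) (auto simp: PSi_def)

lemma g_split: "g n j = card (PSi n (int j) Down) + card (PSi n (int j) UpBlue) + card (PSi n (int j) UpBlack)"
proof -
  have e: "{xs. length xs = n \<and> dsd_path xs \<and> path_level xs = int j} =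
     PSi n (int j) Down \<union> PSi n (int j) UpBlue \<union> PSi n (int j) UpBlack"
    unfolding PSi_def using step.exhaust by auto
  show ?thesis unfolding g_def e
    by (subst card_Un_disjoint, simp_all add: finite_PSi, (auto simp: PSi_def)[1])
       (subst card_Un_disjoint, simp_all add: finite_PSi, auto simp: PSi_def)
qed

lemma g_le: "g n j \<le> 3 ^ n"
  unfolding g_def card_len[symmetric]
  by (rule card_mono[OF finite_len]) auto

lemma PSi_neg: "l < 0 \<Longrightarrow> PSi n l s = {}"
  unfolding PSi_def dsd_path_def by (force dest: spec[of _ "length _"])

lemma PSi_0: "PSi 0 l s = (if l = 0 \<and> s = UpBlack then {[]} else {})"
  by (auto simp: PSi_def lastcls_def dsd_Nil)

lemma card_PSi_0: "card (PSi 0 l s) = (if l = 0 \<and> s = UpBlack then 1 else 0)"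
  by (simp add: PSi_0)

lemma PSi_Suc: "l \<ge> 0 \<Longrightarrow> PSi (Suc n) l s = (\<lambda>xs. xs @ [s]) ` {xs. length xs = n \<and> dsd_path xs \<and> path_level xs = l - step_delta s \<and> okst (lastcls xs) s}"
proof (intro equalityI subsetI)
  fix ys assume "ys \<in> PSi (Suc n) l s"
  then have y: "length ys = Suc n" "dsd_path ys" "path_level ys = l" "lastcls ys = s"
    by (auto simp: PSi_def)
  then have ne: "ys \<noteq> []" by auto
  then have ys: "ys = butlast ys @ [s]" using y(4) by (metis append_butlast_last_id lastcls_def)
  have "dsd_path (butlast ys @ [s])" using y(2) ys by simp
  then have "dsd_path (butlast ys) \<and> okst (lastcls (butlast ys)) s" by (simp add: dsd_snoc)
  moreover have "path_level (butlast ys) = l - step_delta s"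
    using y(3) ys by (metis add_diff_cancel_right' level_append level_single)
  ultimately show "ys \<in> (\<lambda>xs. xs @ [s]) ` {xs. length xs = n \<and> dsd_path xs \<and> path_level xs = l - step_delta s \<and> okst (lastcls xs) s}"
    using y(1) ys by (intro image_eqI[where x="butlast ys"]) auto
next
  fix ys assume "ys \<in> (\<lambda>xs. xs @ [s]) ` {xs. length xs = n \<and> dsd_path xs \<and> path_level xs = l - step_delta s \<and> okst (lastcls xs) s}"
  then obtain xs where "ys = xs @ [s]" "length xs = n" "dsd_path xs" "path_level xs = l - step_delta s" "okst (lastcls xs) s"
    by auto
  moreover assume "l \<ge> 0"
  ultimately show "ys \<in> PSi (Suc n) l s"
    unfolding PSi_def by (simp add: dsd_snoc lastcls_def)
qed

lemma card_PSi_Suc: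
  assumes "l \<ge> 0"
  shows "card (PSi (Suc n) l s) = (\<Sum>p\<in>{p. okst p s}. card (PSi n (l - step_delta s) p))"
proof -
  let ?A = "{xs. length xs = n \<and> dsd_path xs \<and> path_level xs = l - step_delta s \<and> okst (lastcls xs) s}"
  have "card (PSi (Suc n) l s) = card ?A"
    unfolding PSi_Suc[OF assms] by (rule card_image) (auto simp: inj_on_def)
  also have "?A = (\<Union>p\<in>{p. okst p s}. PSi n (l - step_delta s) p)"
    by (auto simp: PSi_def)
  also have "card \<dots> = (\<Sum>p\<in>{p. okst p s}. card (PSi n (l - step_delta s) p))"
    by (rule card_UN_disjoint) (auto simp: finite_PSi UNIV_step intro: finite_subset[of _ UNIV], auto simp: PSi_def)
  finally show ?thesis .
qed

lemma okst_sets: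
  "{p. okst p Down} = {Down, UpBlack}"
  "{p. okst p UpBlue} = {UpBlue, UpBlack}"
  "{p. okst p UpBlack} = {Down, UpBlue, UpBlack}"
  using step.exhaust by (auto simp: okst_def)

lemma card_PSi_Suc':
  assumes "l \<ge> 0"
  shows "card (PSi (Suc n) l Down) = card (PSi n (l + 1) Down) + card (PSi n (l + 1) UpBlack)"
    "card (PSi (Suc n) l UpBlue) = card (PSi n (l - 1) UpBlue) + card (PSi n (l - 1) UpBlack)"
    "card (PSi (Suc n) l UpBlack) = card (PSi n (l - 1) Down) + card (PSi n (l - 1) UpBlue) + card (PSi n (l - 1) UpBlack)"
  using assms by (simp_all add: card_PSi_Suc okst_sets)


lemma alg1:
  fixes a W D :: complex
  assumes "D \<noteq> 0" "4 - 2*a \<noteq> 0" "D = 1 + a + W" "W^2 = 1 - 6*a + 5*a^2"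
  shows "(4-2*a)/D - 2 = (4*a-2*a^2)/D * ((4-2*a)/D - 2 + 1 - D/(4-2*a))"
proof -
  have e: "(4-2*a-2*D)*D*(4-2*a) = (4*a-2*a^2)*((4-2*a-D)*(4-2*a) - D^2)"
  proof -
    have "(4-2*a-2*D)*D*(4-2*a) - (4*a-2*a^2)*((4-2*a-D)*(4-2*a) - D^2) = (4-2*a)*(a-2)*(W^2 - (1 - 6*a + 5*a^2))"
      unfolding assms(3) by algebra
    then show ?thesis using assms(4) by simp
  qed
  show ?thesis using assms(1,2) e
    apply (simp add: field_simps) using e by algebra
qed

lemma alg2:
  fixes z D :: complex
  assumes "D \<noteq> 0" "4 - 2*z^2 \<noteq> 0"
  shows "D / (4 - 2*z^2) * ((4*z - 2*z^3) / D) = z"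
proof -
  have "4*z - 2*z^3 = z * (4 - 2*z^2)" by (simp add: algebra_simps power3_eq_cube power2_eq_square)
  then show ?thesis using assms by simp
qed

lemma alg3:
  fixes z D :: complex
  assumes "D \<noteq> 0" "4 - 2*z^2 \<noteq> 0"
  shows "(1 - D / (4 - 2*z^2)) * ((4*z - 2*z^3) / D) = z * ((4 - 2*z^2) / D - 2 + 1)"
proof -
  have e: "4*z - 2*z^3 = z * (4 - 2*z^2)" by (simp add: algebra_simps power3_eq_cube power2_eq_square)
  have "(1 - D / (4 - 2*z^2)) * (z * (4 - 2*z^2) / D) = z * (4 - 2*z^2 - D) / D"
    using assms by (simp add: field_simps)
  also have "\<dots> = z * ((4 - 2*z^2) / D - 2 + 1)"
    using assms by (simp add: field_simps)
  finally show ?thesis unfolding e .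
qed

lemma prodW:
  fixes z W :: complex
  assumes "W^2 = 1 - 6*z^2 + 5*z^4"
  shows "(1 + z^2 - W) * (1 + z^2 + W) = 4*z^2*(2 - z^2)"
  using assms by algebra

lemma numnz:
  fixes z W :: complex
  assumes "W^2 = 1 - 6*z^2 + 5*z^4" "z \<noteq> 0" "z^2 \<noteq> 2"
  shows "1 + z^2 - W \<noteq> 0"
proof
  assume "1 + z^2 - W = 0"
  then have "4*z^2*(2 - z^2) = 0" using prodW[OF assms(1)] by simp
  then show False using assms(2,3) by simp
qed

lemma K1:
  fixes z W D :: complex
  assumes "W^2 = 1 - 6*z^2 + 5*z^4" "z \<noteq> 0" "D \<noteq> 0" "D = 1 + z^2 + W"
  shows "(4*z - 2*z^3) / D = z * ((1 + z^2 - W) / (2*z^2))"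
proof -
  have e: "(4*z - 2*z^3) * (2*z^2) = z * (1 + z^2 - W) * D"
    using prodW[OF assms(1)] unfolding assms(4) by algebra
  show ?thesis using assms(2,3) e by (simp add: field_simps)
qed

lemma K2:
  fixes z W D :: complex
  assumes "W^2 = 1 - 6*z^2 + 5*z^4" "z \<noteq> 0" "D \<noteq> 0" "D = 1 + z^2 + W" "z^2 \<noteq> 2"
  shows "(4 - 2*z^2) / D - 2 + 1 = (3*z^2 - 3 + W) / (2*(z^2 - 2)) * ((1 + z^2 - W) / (2*z^2))"
proof -
  have e: "(4 - 2*z^2 - D) * (2*(z^2 - 2)) * (2*z^2) = (3*z^2 - 3 + W) * (1 + z^2 - W) * D"
    using assms(1) unfolding assms(4) by algebra
  have n: "z^2 - 2 \<noteq> 0" using assms(5) by simp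
  have l: "(4 - 2*z^2) / D - 2 + 1 = (4 - 2*z^2 - D) / D" using assms(3) by (simp add: field_simps)
  have r: "(3*z^2 - 3 + W) / (2*(z^2 - 2)) * ((1 + z^2 - W) / (2*z^2)) = ((3*z^2 - 3 + W) * (1 + z^2 - W)) / ((2*(z^2 - 2)) * (2*z^2))"
    by simp
  have q: "(2*(z^2 - 2)) * (2*z^2) \<noteq> 0" using n assms(2) by simp
  show ?thesis unfolding l r using frac_eq_eq[OF assms(3) q] e by (simp add: algebra_simps)
qed

lemma K3:
  fixes z W D :: complex
  assumes "W^2 = 1 - 6*z^2 + 5*z^4" "z \<noteq> 0" "D \<noteq> 0" "D = 1 + z^2 + W" "z^2 \<noteq> 2"
  shows "2 * z / (1 + z^2 - W) = 1 / ((4*z - 2*z^3) / D)"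
proof -
  have n1: "1 + z^2 - W \<noteq> 0" by (rule numnz[OF assms(1,2,5)])
  have n2: "4*z - 2*z^3 \<noteq> 0"
  proof
    assume "4*z - 2*z^3 = 0"
    then have "z * (4 - 2*z^2) = 0" by (simp add: algebra_simps power3_eq_cube power2_eq_square)
    then show False using assms(2,5) by simp
  qed
  have e: "2 * z * (4*z - 2*z^3) = D * (1 + z^2 - W)"
    using prodW[OF assms(1)] unfolding assms(4) by algebra
  show ?thesis using n1 n2 assms(3) e by (simp add: field_simps)
qed

lemma fin1:
  fixes x q F S z :: complex
  assumes "x = F * S" "q = z * S"
  shows "x * q^j = F * z^j * S^(j+1)"
  using assms by (simp add: power_mult_distrib)

lemma fin2:
  fixes x q S z u N s :: complex
  assumes "x = N / (2*(z^2-2)) * S" "q = z * S" "s = 1 / q" "q \<noteq> 0" "z \<noteq> 0" "1 - q*u \<noteq> 0" "z^2 \<noteq> 2"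
  shows "x / (1 - q * u) = N / (2 * z * (2 - z^2) * (u - s))"
proof -
  have S: "S = q / z" using assms(2,5) by simp
  have n1: "z^2 - 2 \<noteq> 0" "2 - z^2 \<noteq> 0" using assms(7) by auto
  have n2: "u*q - 1 \<noteq> 0" using assms(6) by (simp add: algebra_simps)
  have n3: "u - 1/q \<noteq> 0" using n2 assms(4) by (simp add: field_simps)
  show ?thesis unfolding assms(1) assms(3) S using assms(4,5,6) n1 n2 n3
    by (simp add: field_simps)
qed

lemma small_bounds0:
  fixes z :: complex
  assumes "norm z < 1/3"
  shows "Re (1 - 6 * z^2 + 5 * z^4) > 0" "Re (1 + z^2) > 0" "z^2 \<noteq> 2" "norm (z^2) < 1/9"
proof -
  have n2: "norm (z^2) < 1/9"
  proof -
    have "norm (z^2) = norm z * norm z" by (simp add: norm_mult power2_eq_square)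
    also have "\<dots> < (1/3) * (1/3)" using assms by (intro mult_strict_mono) auto
    finally show ?thesis by simp
  qed
  then show "norm (z^2) < 1/9" .
  have n4: "norm (z^4) < 1/81"
  proof -
    have "z^4 = z^2 * z^2" by (simp add: power2_eq_square power4_eq_xxxx)
    then have "norm (z^4) = norm (z^2) * norm (z^2)" by (simp only: norm_mult)
    also have "\<dots> < (1/9) * (1/9)" using n2 by (intro mult_strict_mono) auto
    finally show ?thesis by simp
  qed
  have "norm (6 * z^2 - 5 * z^4) \<le> norm (6 * z^2) + norm (5 * z^4)"
    by (rule norm_triangle_ineq4)
  also have "\<dots> = 6 * norm (z^2) + 5 * norm (z^4)" by (simp add: norm_mult)
  also have "\<dots> < 1" using n2 n4 by simp
  finally have "norm (6 * z^2 - 5 * z^4) < 1" .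
  then have "Re (6 * z^2 - 5 * z^4) < 1" using complex_Re_le_cmod[of "6 * z^2 - 5 * z^4"] by linarith
  then show "Re (1 - 6 * z^2 + 5 * z^4) > 0" by simp
  have "Re (z^2) > -1" using n2 abs_Re_le_cmod[of "z^2"] by linarith
  then show "Re (1 + z^2) > 0" by simp
  show "z^2 \<noteq> 2" using n2 by auto
qed

definition Dn :: "complex \<Rightarrow> complex" where "Dn z = 1 + z^2 + Wf z"
definition qf :: "complex \<Rightarrow> complex" where "qf z = (4*z - 2*z^3) / Dn z"
definition bf :: "complex \<Rightarrow> complex" where "bf z = Dn z / (4 - 2*z^2)"
definition af :: "complex \<Rightarrow> complex" where "af z = (4 - 2*z^2) / Dn z - 2"

lemma Wf_sq: "Wf z ^ 2 = 1 - 6 * z^2 + 5 * z^4"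
  by (simp add: Wf_def)

lemma Dn_bounds:
  assumes "norm z < 1/3"
  shows "Re (Dn z) > 8/9" "Dn z \<noteq> 0" "4 - 2*z^2 \<noteq> 0"
proof -
  have "Re (z^2) > -1/9" using small_bounds0(4)[OF assms] abs_Re_le_cmod[of "z^2"] by linarith
  moreover have "Re (Wf z) \<ge> 0" unfolding Wf_def by (rule Re_csqrt)
  ultimately show "Re (Dn z) > 8/9" by (simp add: Dn_def)
  then show "Dn z \<noteq> 0" by auto
  show "4 - 2*z^2 \<noteq> 0" using small_bounds0(3)[OF assms] by auto
qed

lemma I1:
  assumes "norm z < 1/3"
  shows "af z = z * qf z * (af z + 1 - bf z)"
proof -
  note b = Dn_bounds[OF assms]
  have zq: "z * qf z = (4*z^2 - 2*(z^2)^2) / Dn z" unfolding qf_def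
    by (simp add: algebra_simps power2_eq_square power3_eq_cube power4_eq_xxxx)
  have w: "Wf z ^ 2 = 1 - 6 * z^2 + 5 * (z^2)^2" using Wf_sq[of z] by simp
  have A: "(4-2*z^2)/Dn z - 2 = (4*z^2-2*(z^2)^2)/Dn z * ((4-2*z^2)/Dn z - 2 + 1 - Dn z/(4-2*z^2))"
    by (rule alg1[OF b(2) b(3) Dn_def w])
  show ?thesis using A unfolding af_def bf_def zq .
qed

lemma I2:
  assumes "norm z < 1/3"
  shows "bf z * qf z = z"
  using alg2[OF Dn_bounds(2,3)[OF assms]] unfolding qf_def bf_def .

lemma I3:
  assumes "norm z < 1/3"
  shows "(1 - bf z) * qf z = z * (af z + 1)"
  using alg3[OF Dn_bounds(2,3)[OF assms]] unfolding qf_def bf_def af_def .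

abbreviation B3 :: "complex set" where "B3 \<equiv> ball 0 (1/3)"

lemma Wf_holo: "Wf holomorphic_on B3"
proof -
  have "(\<lambda>z. csqrt (1 - 6 * z^2 + 5 * z^4)) holomorphic_on B3"
  proof (rule holomorphic_on_csqrt')
    show "(\<lambda>z. 1 - 6 * z^2 + 5 * z^4) holomorphic_on B3" by (intro holomorphic_intros)
    fix z :: complex assume "z \<in> B3"
    then have "norm z < 1/3" by simp
    from small_bounds0(1)[OF this] show "1 - 6 * z^2 + 5 * z^4 \<notin> \<real>\<^sub>\<le>\<^sub>0"
      by (auto simp: complex_nonpos_Reals_iff)
  qed
  then show ?thesis unfolding Wf_def[abs_def] .
qed

lemma Dn_holo: "Dn holomorphic_on B3"
proof -
  have "(\<lambda>z. 1 + z^2 + Wf z) holomorphic_on B3"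
    by (intro holomorphic_intros Wf_holo)
  then show ?thesis unfolding Dn_def[abs_def] .
qed

lemma nz_B3:
  assumes "z \<in> B3" shows "Dn z \<noteq> 0" "4 - 2*z^2 \<noteq> 0"
proof -
  have "norm z < 1/3" using assms by simp
  then show "Dn z \<noteq> 0" "4 - 2*z^2 \<noteq> 0" using Dn_bounds by auto
qed

lemma qf_holo: "qf holomorphic_on B3"
proof -
  have "(\<lambda>z. (4*z - 2*z^3) / Dn z) holomorphic_on B3"
    by (intro holomorphic_intros Dn_holo) (use nz_B3 in blast)+
  then show ?thesis unfolding qf_def[abs_def] .
qed

lemma bf_holo: "bf holomorphic_on B3"
proof -
  have "(\<lambda>z. Dn z / (4 - 2*z^2)) holomorphic_on B3"
    by (intro holomorphic_intros Dn_holo) (use nz_B3 in blast)+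
  then show ?thesis unfolding bf_def[abs_def] .
qed

lemma af_holo: "af holomorphic_on B3"
proof -
  have "(\<lambda>z. (4 - 2*z^2) / Dn z - 2) holomorphic_on B3"
    by (intro holomorphic_intros Dn_holo) (use nz_B3 in blast)+
  then show ?thesis unfolding af_def[abs_def] .
qed

definition AF :: "complex fps" where "AF = fps_expansion af 0"
definition BF :: "complex fps" where "BF = fps_expansion bf 0"
definition QF :: "complex fps" where "QF = fps_expansion qf 0"

lemma hA: "af has_fps_expansion AF"
  unfolding AF_def by (rule has_fps_expansion_fps_expansion[OF _ _ af_holo]) auto
lemma hB: "bf has_fps_expansion BF"
  unfolding BF_def by (rule has_fps_expansion_fps_expansion[OF _ _ bf_holo]) auto
lemma hQ: "qf has_fps_expansion QF"
  unfolding QF_def by (rule has_fps_expansion_fps_expansion[OF _ _ qf_holo]) auto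

lemma transfer:
  fixes f g :: "complex \<Rightarrow> complex"
  assumes "f has_fps_expansion F" "g has_fps_expansion G" "\<And>z. norm z < 1/3 \<Longrightarrow> f z = g z"
  shows "F = G"
proof -
  have "eventually (\<lambda>z. z \<in> B3) (nhds 0)"
    by (intro eventually_nhds_in_open) auto
  then have ev: "eventually (\<lambda>z. f z = g z) (nhds 0)"
    by eventually_elim (use assms(3) in auto)
  have "g has_fps_expansion F" using has_fps_expansion_cong[OF ev refl] assms(1) by simp
  then have "fps_expansion g 0 = F" by (rule fps_expansion_eqI)
  moreover have "fps_expansion g 0 = G" using assms(2) by (rule fps_expansion_eqI)
  ultimately show ?thesis by simp
qed

lemma E1: "AF = fps_X * QF * (AF + 1 - BF)"
proof -
  have "(\<lambda>z. z * qf z * (af z + 1 - bf z)) has_fps_expansion fps_X * QF * (AF + 1 - BF)"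
    by (intro fps_expansion_intros hA hB hQ)
  then show ?thesis by (rule transfer[OF hA]) (rule I1)
qed

lemma E2: "BF * QF = fps_X"
proof -
  have "(\<lambda>z. bf z * qf z) has_fps_expansion BF * QF"
    by (intro fps_expansion_intros hA hB hQ)
  then show ?thesis by (rule transfer[OF _ has_fps_expansion_fps_X]) (rule I2)
qed

lemma E3: "(1 - BF) * QF = fps_X * (AF + 1)"
proof -
  have "(\<lambda>z. (1 - bf z) * qf z) has_fps_expansion (1 - BF) * QF"
    by (intro fps_expansion_intros hA hB hQ)
  moreover have "(\<lambda>z. z * (af z + 1)) has_fps_expansion fps_X * (AF + 1)"
    by (intro fps_expansion_intros hA hB hQ)
  ultimately show ?thesis by (rule transfer) (rule I3)
qed

fun FF :: "step \<Rightarrow> nat \<Rightarrow> complex fps" where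
  "FF Down j = AF * QF ^ j"
| "FF UpBlue j = (if j = 0 then 0 else BF * QF ^ j)"
| "FF UpBlack j = (if j = 0 then 1 else (1 - BF) * QF ^ j)"

lemma FF_Down: "FF Down j = fps_X * (FF Down (Suc j) + FF UpBlack (Suc j))"
proof -
  have "fps_X * (FF Down (Suc j) + FF UpBlack (Suc j)) = QF ^ j * (fps_X * QF * (AF + 1 - BF))"
    by (simp add: algebra_simps)
  also have "\<dots> = AF * QF ^ j" using E1 by simp
  finally show ?thesis by simp
qed

lemma FF_UpBlue: "FF UpBlue (Suc j) = fps_X * (FF UpBlue j + FF UpBlack j)"
proof (cases j)
  case 0 then show ?thesis using E2 by simp
next
  case (Suc k)
  have "FF UpBlue (Suc j) = (BF * QF) * QF ^ j" by (simp add: algebra_simps)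
  also have "\<dots> = fps_X * QF ^ j" using E2 by simp
  also have "\<dots> = fps_X * (FF UpBlue j + FF UpBlack j)" using Suc by (simp add: algebra_simps)
  finally show ?thesis .
qed

lemma FF_UpBlack: "FF UpBlack (Suc j) = fps_X * (FF Down j + FF UpBlue j + FF UpBlack j)"
proof (cases j)
  case 0 then show ?thesis using E3 by (simp add: algebra_simps)
next
  case (Suc k)
  have "FF UpBlack (Suc j) = ((1 - BF) * QF) * QF ^ j" by (simp add: algebra_simps)
  also have "\<dots> = fps_X * (AF + 1) * QF ^ j" using E3 by simp
  also have "\<dots> = fps_X * (FF Down j + FF UpBlue j + FF UpBlack j)" using Suc by (simp add: algebra_simps)
  finally show ?thesis .
qed

lemma FF_coeff: "fps_nth (FF s j) n = of_nat (card (PSi n (int j) s))"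
proof (induction n arbitrary: j s)
  case 0
  show ?case
  proof (cases s)
    case UpBlack then show ?thesis
    proof (cases j)
      case (Suc k) then show ?thesis unfolding UpBlack Suc by (subst FF_UpBlack) (simp add: card_PSi_0)
    qed (simp add: card_PSi_0)
  next
    case UpBlue then show ?thesis
    proof (cases j)
      case (Suc k) then show ?thesis unfolding UpBlue Suc by (subst FF_UpBlue) (simp add: card_PSi_0)
    qed (simp add: card_PSi_0)
  next
    case Down then show ?thesis
      unfolding Down by (subst FF_Down) (simp add: card_PSi_0)
  qed
next
  case (Suc n)
  show ?case
  proof (cases s)
    case Down
    have "fps_nth (FF Down j) (Suc n) = fps_nth (FF Down (Suc j)) n + fps_nth (FF UpBlack (Suc j)) n"
      by (subst FF_Down) simp
    also have "\<dots> = of_nat (card (PSi n (int (Suc j)) Down)) + of_nat (card (PSi n (int (Suc j)) UpBlack))"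
      by (simp only: Suc.IH)
    also have "\<dots> = of_nat (card (PSi (Suc n) (int j) Down))"
      using card_PSi_Suc'(1)[of "int j" n] by (simp add: add.commute)
    finally show ?thesis using Down by simp
  next
    case UpBlue
    show ?thesis
    proof (cases j)
      case 0
      have "card (PSi (Suc n) (int j) UpBlue) = 0"
        using 0 card_PSi_Suc'(2)[of "int j" n] by (simp add: PSi_neg)
      then show ?thesis using 0 UpBlue by simp
    next
      case (Suc k)
      have "fps_nth (FF UpBlue j) (Suc n) = fps_nth (FF UpBlue k) n + fps_nth (FF UpBlack k) n"
        unfolding Suc by (subst FF_UpBlue) simp
      also have "\<dots> = of_nat (card (PSi n (int k) UpBlue)) + of_nat (card (PSi n (int k) UpBlack))"
        by (simp only: Suc.IH)
      also have "\<dots> = of_nat (card (PSi (Suc n) (int j) UpBlue))"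
        using card_PSi_Suc'(2)[of "int j" n] Suc by simp
      finally show ?thesis using UpBlue by simp
    qed
  next
    case UpBlack
    show ?thesis
    proof (cases j)
      case 0
      have "card (PSi (Suc n) (int j) UpBlack) = 0"
        using 0 card_PSi_Suc'(3)[of "int j" n] by (simp add: PSi_neg)
      then show ?thesis using 0 UpBlack by simp
    next
      case (Suc k)
      have "fps_nth (FF UpBlack j) (Suc n) = fps_nth (FF Down k) n + fps_nth (FF UpBlue k) n + fps_nth (FF UpBlack k) n"
        unfolding Suc by (subst FF_UpBlack) simp
      also have "\<dots> = of_nat (card (PSi n (int k) Down)) + of_nat (card (PSi n (int k) UpBlue)) + of_nat (card (PSi n (int k) UpBlack))"
        by (simp only: Suc.IH)
      also have "\<dots> = of_nat (card (PSi (Suc n) (int j) UpBlack))"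
        using card_PSi_Suc'(3)[of "int j" n] Suc by simp
      finally show ?thesis using UpBlack by simp
    qed
  qed
qed

lemma GF_coeff: "fps_nth ((AF + 1) * QF ^ j) n = of_nat (g n j)"
proof -
  have eq: "(AF + 1) * QF ^ j = FF Down j + FF UpBlue j + FF UpBlack j"
    by (cases j) (simp_all add: algebra_simps)
  show ?thesis unfolding eq fps_add_nth FF_coeff g_split by simp
qed


lemma geo_real: "0 \<le> (x::real) \<Longrightarrow> x < 1 \<Longrightarrow> ((\<lambda>n. x^n) has_sum (1/(1-x))) UNIV"
  by (rule sums_nonneg_imp_has_sum[OF geometric_sums]) auto

lemma geo_complex: "norm (w::complex) < 1 \<Longrightarrow> ((\<lambda>n. w^n) has_sum (1/(1-w))) UNIV"
proof -
  assume w: "norm w < 1"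
  have "summable (\<lambda>n. norm w ^ n)" using w by (intro summable_geometric) simp
  then have "summable (\<lambda>n. norm (w ^ n))" by (simp add: norm_power)
  then show ?thesis by (rule norm_summable_imp_has_sum[OF _ geometric_sums[OF w]])
qed

lemma qf_small:
  assumes "norm z < 1/6"
  shows "norm (qf z) < 1"
proof -
  have "norm z ^ 3 < (1/6)^3" using assms by (intro power_strict_mono) auto
  then have z3: "norm z ^ 3 < 1/216" by (simp add: power_divide)
  have "norm (4*z - 2*z^3) \<le> norm (4*z) + norm (2*z^3)" by (rule norm_triangle_ineq4)
  also have "\<dots> = 4 * norm z + 2 * norm z ^ 3" by (simp add: norm_mult norm_power)
  also have "\<dots> < 3/4" using assms z3 by linarith
  finally have a: "norm (4*z - 2*z^3) < 3/4" .
  have "Re (Dn z) > 8/9" using Dn_bounds(1)[of z] assms by simp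
  then have b: "norm (Dn z) > 8/9" using complex_Re_le_cmod[of "Dn z"] by linarith
  have "norm (qf z) = norm (4*z - 2*z^3) / norm (Dn z)" by (simp add: qf_def norm_divide)
  also have "\<dots> < 1" using a b by (simp add: divide_less_eq)
  finally show ?thesis .
qed

lemma qf_nz:
  assumes "norm z < 1/3" "z \<noteq> 0"
  shows "qf z \<noteq> 0"
proof -
  have "4*z - 2*z^3 = z * (4 - 2*z^2)" by (simp add: algebra_simps power3_eq_cube power2_eq_square)
  then have "4*z - 2*z^3 \<noteq> 0" using assms Dn_bounds(3)[OF assms(1)] by simp
  then show ?thesis using Dn_bounds(2)[OF assms(1)] by (simp add: qf_def)
qed

lemma val_j:
  assumes "norm z < 1/3"
  shows "(\<lambda>n. of_nat (g n j) * z ^ n) sums ((af z + 1) * qf z ^ j)"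
proof -
  have h: "(\<lambda>z. (af z + 1) * qf z ^ j) has_fps_expansion (AF + 1) * QF ^ j"
    by (intro fps_expansion_intros hA hQ)
  have holo: "(\<lambda>z. (af z + 1) * qf z ^ j) holomorphic_on eball 0 (ereal (1/3))"
    unfolding eball_ereal by (intro holomorphic_intros af_holo qf_holo)
  have "(\<lambda>n. fps_nth ((AF + 1) * QF ^ j) n * z ^ n) sums ((af z + 1) * qf z ^ j)"
    by (rule has_fps_expansion_imp_sums_complex[OF h holo]) (use assms in simp)
  then show ?thesis by (simp add: GF_coeff)
qed

lemma vals:
  assumes "norm z < 1/3" "z \<noteq> 0"
  shows "qf z = z * Sf z"
    "af z + 1 = (3 * z^2 - 3 + Wf z) / (2 * (z^2 - 2)) * Sf z"
    "s1 z = 1 / qf z"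
proof -
  note b = Dn_bounds[OF assms(1)]
  have d: "Dn z = 1 + z^2 + Wf z" by (simp add: Dn_def)
  have z2: "z^2 \<noteq> 2" using small_bounds0(3)[OF assms(1)] .
  show "qf z = z * Sf z" unfolding qf_def Sf_def by (rule K1[OF Wf_sq assms(2) b(2) d])
  show "af z + 1 = (3 * z^2 - 3 + Wf z) / (2 * (z^2 - 2)) * Sf z"
    unfolding af_def Sf_def by (rule K2[OF Wf_sq assms(2) b(2) d z2])
  show "s1 z = 1 / qf z"
    unfolding qf_def s1_def by (rule K3[OF Wf_sq assms(2) b(2) d z2])
qed

lemma part2:
  assumes "0 < norm z" "norm z < 1/3"
  shows "(\<lambda>n. of_nat (g n j) * z ^ n) sums
          ((3 * z^2 - 3 + Wf z) / (2 * (z^2 - 2)) * z ^ j * Sf z ^ (j + 1))"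
proof -
  have z: "z \<noteq> 0" using assms by auto
  have "(af z + 1) * qf z ^ j = (3 * z^2 - 3 + Wf z) / (2 * (z^2 - 2)) * z ^ j * Sf z ^ (j + 1)"
    by (rule fin1[OF vals(2)[OF assms(2) z] vals(1)[OF assms(2) z]])
  then show ?thesis using val_j[OF assms(2), of j] by simp
qed

lemma part1:
  assumes "0 < norm z" "norm z < 1/6" "norm u < 1/6"
  shows "((\<lambda>(n, j). of_nat (g n j) * z ^ n * u ^ j) has_sum
          ((3 * z^2 - 3 + Wf z) / (2 * z * (2 - z^2) * (u - s1 z)))) UNIV"
proof -
  define c where "c n j = of_nat (g n j) * z ^ n * u ^ j" for n j
  define X where "X j = (af z + 1) * qf z ^ j" for j
  have z: "z \<noteq> 0" and z3: "norm z < 1/3" using assms by auto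
  have bound: "norm (c n j) \<le> norm u ^ j * (3 * norm z) ^ n" for n j
  proof -
    have "real (g n j) \<le> 3 ^ n" using g_le[of n j] by (metis of_nat_le_iff of_nat_numeral of_nat_power)
    then have "real (g n j) * (norm z ^ n * norm u ^ j) \<le> 3 ^ n * (norm z ^ n * norm u ^ j)"
      by (intro mult_right_mono) auto
    then show ?thesis by (simp add: c_def norm_mult norm_power power_mult_distrib algebra_simps)
  qed
  have inner: "((\<lambda>n. c n j) has_sum (X j * u ^ j)) UNIV" for j
  proof -
    have s: "(\<lambda>n. c n j) sums (X j * u ^ j)"
      unfolding c_def X_def using sums_mult2[OF val_j[OF z3, of j], of "u ^ j"] by simp
    have "summable (\<lambda>n. norm u ^ j * (3 * norm z) ^ n)"
      using assms by (intro summable_mult summable_geometric) simp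
    then have "summable (\<lambda>n. norm (c n j))"
      by (rule summable_comparison_test[rotated]) (use bound in auto)
    then show ?thesis by (rule norm_summable_imp_has_sum[OF _ s])
  qed
  define G where "G = (\<lambda>(j, n). norm u ^ j * (3 * norm z) ^ n)"
  have Gh: "((\<lambda>n. norm u ^ j * (3 * norm z) ^ n) has_sum (norm u ^ j * (1 / (1 - 3 * norm z)))) UNIV" for j
    by (rule has_sum_cmult_right, rule geo_real) (use assms in auto)
  have Gabs: "(\<lambda>x. norm (G x)) summable_on UNIV \<times> UNIV"
  proof (subst Infinite_Sum.abs_summable_on_Sigma_iff, intro conjI ballI)
    fix j :: nat
    show "(\<lambda>n. norm (G (j, n))) summable_on UNIV"
      using Gh[of j] unfolding G_def by (auto simp: summable_on_def norm_mult norm_power)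
  next
    have e: "(\<Sum>\<^sub>\<infinity>n. norm (G (j, n))) = norm u ^ j * (1 / (1 - 3 * norm z))" for j
      using Gh[of j] unfolding G_def by (simp add: norm_mult norm_power infsumI)
    have "((\<lambda>j. norm u ^ j * (1 / (1 - 3 * norm z))) has_sum ((1 / (1 - norm u)) * (1 / (1 - 3 * norm z)))) UNIV"
      by (rule has_sum_cmult_left, rule geo_real) (use assms in auto)
    then show "(\<lambda>j. norm (\<Sum>\<^sub>\<infinity>n\<in>UNIV. norm (G (j, n)))) summable_on UNIV"
      unfolding e using assms by (auto simp: summable_on_def norm_mult norm_power)
  qed
  have summ: "(\<lambda>(j, n). c n j) summable_on UNIV \<times> UNIV"
    unfolding summable_on_iff_abs_summable_on_complex
    by (rule Infinite_Sum.abs_summable_on_comparison_test[OF Gabs]) (auto simp: G_def intro: order.trans[OF bound])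
  define S where "S = infsum (\<lambda>(j, n). c n j) (UNIV \<times> UNIV)"
  have total: "((\<lambda>(j, n). c n j) has_sum S) (UNIV \<times> UNIV)"
    unfolding S_def using summ by (rule has_sum_infsum)
  have outer: "((\<lambda>j. X j * u ^ j) has_sum S) UNIV"
    by (rule has_sum_Sigma'[OF total]) (simp add: inner)
  have qu: "norm (qf z * u) < 1"
  proof -
    have "norm (qf z * u) = norm (qf z) * norm u" by (simp add: norm_mult)
    also have "\<dots> \<le> 1 * norm u" using qf_small[OF assms(2)] by (intro mult_right_mono) auto
    also have "\<dots> < 1" using assms by simp
    finally show ?thesis .
  qed
  have geo: "((\<lambda>j. X j * u ^ j) has_sum ((af z + 1) * (1 / (1 - qf z * u)))) UNIV"
  proof -
    have "((\<lambda>j. (af z + 1) * (qf z * u) ^ j) has_sum ((af z + 1) * (1 / (1 - qf z * u)))) UNIV"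
      by (rule has_sum_cmult_right, rule geo_complex[OF qu])
    then show ?thesis by (simp add: X_def power_mult_distrib mult.assoc)
  qed
  have SV: "S = (af z + 1) * (1 / (1 - qf z * u))"
    using has_sum_unique[OF outer geo] .
  have nz1: "1 - qf z * u \<noteq> 0" using qu by auto
  have "(af z + 1) / (1 - qf z * u) = (3 * z^2 - 3 + Wf z) / (2 * z * (2 - z^2) * (u - s1 z))"
    by (rule fin2[OF vals(2)[OF z3 z] vals(1)[OF z3 z] vals(3)[OF z3 z] qf_nz[OF z3 z] z nz1 small_bounds0(3)[OF z3]])
  then have SV': "S = (3 * z^2 - 3 + Wf z) / (2 * z * (2 - z^2) * (u - s1 z))"
    using SV by simp
  have "((\<lambda>(n, j). c n j) has_sum S) (UNIV \<times> UNIV)"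
    using total by (subst has_sum_swap) (simp add: case_prod_unfold)
  then show ?thesis unfolding SV'[symmetric] c_def by simp
qed

theorem theorem3:
  shows "\<exists>r>0.
    (\<forall>z u::complex. 0 < norm z \<and> norm z < r \<and> norm u < r \<longrightarrow>
       ((\<lambda>(n, j). of_nat (g n j) * z ^ n * u ^ j) has_sum
          ((3 * z^2 - 3 + Wf z) / (2 * z * (2 - z^2) * (u - s1 z)))) UNIV) \<and>
    (\<forall>j::nat. \<forall>z::complex. 0 < norm z \<and> norm z < r \<longrightarrow>
       (\<lambda>n. of_nat (g n j) * z ^ n) sums
          ((3 * z^2 - 3 + Wf z) / (2 * (z^2 - 2)) * z ^ j * Sf z ^ (j + 1)))"
proof (intro exI[of _ "1/6"] conjI allI impI)
  fix z u :: complex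
  assume "0 < norm z \<and> norm z < 1/6 \<and> norm u < 1/6"
  then show "((\<lambda>(n, j). of_nat (g n j) * z ^ n * u ^ j) has_sum
          ((3 * z^2 - 3 + Wf z) / (2 * z * (2 - z^2) * (u - s1 z)))) UNIV"
    using part1 by blast
next
  fix j :: nat and z :: complex
  assume "0 < norm z \<and> norm z < 1/6"
  then show "(\<lambda>n. of_nat (g n j) * z ^ n) sums
          ((3 * z^2 - 3 + Wf z) / (2 * (z^2 - 2)) * z ^ j * Sf z ^ (j + 1))"
    using part2[of z j] by simp
qed simp

end
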